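(* For every $X\in B(\mathcal H)^d$ there exists a unitary $u\in B(\mathcal H)$ such that for every $k\ge0$, $$u\big(\mathrm{span}\{e_1,\dots,e_{k+1}\}\big)\subset V_k^X\quad\text{and}\quad u^*\big(V_k^X\big)\subset\mathrm{span}\{e_1,\dots,e_{\alpha(k,d)}\}.$$ That is, every $X\in B(\mathcal H)^d$ has a shift form.
   Context: $\mathcal H$ is an infinite-dimensional separable complex Hilbert space with a fixed orthonormal basis $e_1,e_2,\dots$, and $M\in B(\mathcal H)$ is the shift $Me_j=e_{j+1}$. For $X=(X^1,\dots,X^d)\in B(\mathcal H)^d$, $(X,M)$ denotes the $(d+1)$-tuple $(X^1,\dots,X^d,M)$. $\mathcal P(k,d)$ is the complex vector space of polynomials in $d+1$ noncommuting variables of degree at most $k$, and $\alpha(k,d)=\dim\mathcal P(k,d)$. For $k\ge0$, $V_k^X:=\{p(X,M)e_1: p\in\mathcal P(k,d)\}\subset\mathcal H$. A shift form of $X$ is a tuple $\widetilde X=u^*Xu=(u^*X^1u,\dots,u^*X^du)$ where $u$ is a unitary satisfying the two displayed inclusions for all $k\ge0$. *)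

theory Defs
  imports Complex_Main
begin

text \<open>Model: the separable infinite-dimensional Hilbert space H with fixed orthonormal
basis e_1, e_2, ... is realised as l^2(nat); the basis vector e_(j+1) is the
indicator of index j (0-based indexing).\<close>

type_synonym vec = "nat \<Rightarrow> complex"

definition l2 :: "vec set" where
  "l2 = {f. summable (\<lambda>n. (cmod (f n))\<^sup>2)}"

definition l2norm :: "vec \<Rightarrow> real" where
  "l2norm f = sqrt (\<Sum>n. (cmod (f n))\<^sup>2)"

definition l2inner :: "vec \<Rightarrow> vec \<Rightarrow> complex" where
  "l2inner f g = (\<Sum>n. f n * cnj (g n))"

definition ebasis :: "nat \<Rightarrow> vec" where
  "ebasis j = (\<lambda>n. if n = j then 1 else 0)"

definition bop :: "(vec \<Rightarrow> vec) \<Rightarrow> bool" where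
  "bop T \<longleftrightarrow> (\<forall>f\<in>l2. T f \<in> l2)
     \<and> (\<forall>f\<in>l2. \<forall>g\<in>l2. \<forall>a::complex. T (\<lambda>n. a * f n + g n) = (\<lambda>n. a * T f n + T g n))
     \<and> (\<exists>C. \<forall>f\<in>l2. l2norm (T f) \<le> C * l2norm f)"

definition is_adjoint :: "(vec \<Rightarrow> vec) \<Rightarrow> (vec \<Rightarrow> vec) \<Rightarrow> bool" where
  "is_adjoint T T' \<longleftrightarrow> bop T \<and> bop T' \<and>
     (\<forall>f\<in>l2. \<forall>g\<in>l2. l2inner (T f) g = l2inner f (T' g))"

definition unitary_with_adj :: "(vec \<Rightarrow> vec) \<Rightarrow> (vec \<Rightarrow> vec) \<Rightarrow> bool" where
  "unitary_with_adj u ustar \<longleftrightarrow> is_adjoint u ustar \<and>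
     (\<forall>f\<in>l2. ustar (u f) = f \<and> u (ustar f) = f)"

definition shiftM :: "vec \<Rightarrow> vec" where
  "shiftM f = (\<lambda>n. if n = 0 then 0 else f (n - 1))"

text \<open>The (d+1)-tuple (X,M): letter i < d is X^(i+1), letter d is M.\<close>
definition tupXM :: "nat \<Rightarrow> (nat \<Rightarrow> vec \<Rightarrow> vec) \<Rightarrow> nat \<Rightarrow> vec \<Rightarrow> vec" where
  "tupXM d X i = (if i < d then X i else shiftM)"

text \<open>Monomials (words) of degree at most k in the d+1 noncommuting variables.\<close>
definition words :: "nat \<Rightarrow> nat \<Rightarrow> nat list set" where
  "words k d = {w. length w \<le> k \<and> set w \<subseteq> {..d}}"

definition word_op :: "(nat \<Rightarrow> vec \<Rightarrow> vec) \<Rightarrow> nat list \<Rightarrow> vec \<Rightarrow> vec" where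
  "word_op A w = foldr (\<lambda>i g. A i \<circ> g) w id"

text \<open>A polynomial p in P(k,d) is given by its coefficients on the monomials in words k d;
  p(X,M) v is the corresponding linear combination of monomial evaluations.\<close>
definition poly_eval :: "nat \<Rightarrow> nat \<Rightarrow> (nat \<Rightarrow> vec \<Rightarrow> vec) \<Rightarrow> (nat list \<Rightarrow> complex) \<Rightarrow> vec \<Rightarrow> vec" where
  "poly_eval k d X p v = (\<lambda>n. \<Sum>w\<in>words k d. p w * word_op (tupXM d X) w v n)"

definition Vk :: "nat \<Rightarrow> nat \<Rightarrow> (nat \<Rightarrow> vec \<Rightarrow> vec) \<Rightarrow> vec set" where
  "Vk k d X = {poly_eval k d X p (ebasis 0) | p. True}"

text \<open>alpha(k,d) = dim P(k,d) = number of monomials of degree at most k.\<close>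
definition alpha :: "nat \<Rightarrow> nat \<Rightarrow> nat" where
  "alpha k d = card (words k d)"

text \<open>span{e_1,...,e_m} = vectors supported on the first m coordinates.\<close>
definition span_e :: "nat \<Rightarrow> vec set" where
  "span_e m = {f. \<forall>n\<ge>m. f n = 0}"

end

theory Submission
  imports Defs "HOL-Analysis.L2_Norm"
begin


lemma l2_iff: "f \<in> l2 \<longleftrightarrow> summable (\<lambda>n. (cmod (f n))\<^sup>2)"
  by (simp add: l2_def)

lemma sq_add_le: "(cmod (a + b))\<^sup>2 \<le> 2 * (cmod a)\<^sup>2 + 2 * (cmod b)\<^sup>2"
proof -
  have "cmod (a+b) \<le> cmod a + cmod b" by (rule norm_triangle_ineq)
  then have "(cmod (a + b))\<^sup>2 \<le> (cmod a + cmod b)\<^sup>2"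
    by (simp add: power_mono)
  also have "\<dots> \<le> 2 * (cmod a)\<^sup>2 + 2 * (cmod b)\<^sup>2"
    using zero_le_power2[of "cmod a - cmod b"] by (simp add: power2_diff power2_sum)
  finally show ?thesis .
qed

lemma l2_add: "f \<in> l2 \<Longrightarrow> g \<in> l2 \<Longrightarrow> (\<lambda>n. f n + g n) \<in> l2"
  unfolding l2_iff
  apply (rule summable_comparison_test'[where g="\<lambda>n. 2 * (cmod (f n))\<^sup>2 + 2 * (cmod (g n))\<^sup>2" and N=0])
   apply (intro summable_add summable_mult; assumption)
  using sq_add_le by simp

lemma l2_scale: "f \<in> l2 \<Longrightarrow> (\<lambda>n. c * f n) \<in> l2"
  unfolding l2_iff by (simp add: norm_mult power_mult_distrib summable_mult)

lemma l2_zero: "(\<lambda>n. 0) \<in> l2"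
  unfolding l2_iff by simp

lemma l2_sum: "finite I \<Longrightarrow> (\<And>i. i \<in> I \<Longrightarrow> F i \<in> l2) \<Longrightarrow> (\<lambda>n. \<Sum>i\<in>I. c i * F i n) \<in> l2"
proof (induction I rule: finite_induct)
  case empty then show ?case by (simp add: l2_zero)
next
  case (insert x F)
  then show ?case by (simp add: l2_add l2_scale)
qed

lemma l2_diff: "f \<in> l2 \<Longrightarrow> g \<in> l2 \<Longrightarrow> (\<lambda>n. f n - g n) \<in> l2"
  using l2_add[OF _ l2_scale[of g "-1"], of f] by simp

lemma l2_finsupp: "(\<And>n. n \<ge> M \<Longrightarrow> f n = 0) \<Longrightarrow> f \<in> l2"
  unfolding l2_iff by (rule summable_finite[of "{..<M}"]) auto

lemma l2_ebasis: "ebasis j \<in> l2"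
  by (rule l2_finsupp[of "Suc j"]) (simp add: ebasis_def)

lemma l2norm_nonneg: "f \<in> l2 \<Longrightarrow> l2norm f \<ge> 0"
  unfolding l2norm_def l2_iff by (simp add: suminf_nonneg)

lemma l2_sumsq: "f \<in> l2 \<Longrightarrow> (\<Sum>n. (cmod (f n))\<^sup>2) = (l2norm f)\<^sup>2"
  unfolding l2norm_def l2_iff by (simp add: suminf_nonneg)

section \<open>inner product\<close>

lemma inner_abs_summable: "f \<in> l2 \<Longrightarrow> g \<in> l2 \<Longrightarrow> summable (\<lambda>n. cmod (f n * cnj (g n)))"
  unfolding l2_iff
  apply (rule summable_comparison_test'[where g="\<lambda>n. (cmod (f n))\<^sup>2 + (cmod (g n))\<^sup>2" and N=0])
   apply (intro summable_add; assumption)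
proof -
  fix n
  have "2 * (cmod (f n) * cmod (g n)) \<le> (cmod (f n))\<^sup>2 + (cmod (g n))\<^sup>2"
    using zero_le_power2[of "cmod (f n) - cmod (g n)"] by (simp add: power2_diff)
  moreover have "0 \<le> cmod (f n) * cmod (g n)" by simp
  ultimately have "cmod (f n) * cmod (g n) \<le> (cmod (f n))\<^sup>2 + (cmod (g n))\<^sup>2" by linarith
  then show "norm (cmod (f n * cnj (g n))) \<le> (cmod (f n))\<^sup>2 + (cmod (g n))\<^sup>2"
    by (simp add: norm_mult)
qed

lemma inner_summable: "f \<in> l2 \<Longrightarrow> g \<in> l2 \<Longrightarrow> summable (\<lambda>n. f n * cnj (g n))"
  by (rule summable_norm_cancel[OF inner_abs_summable])

lemma inner_sum_left:
  assumes "finite I" "\<And>i. i \<in> I \<Longrightarrow> F i \<in> l2" "h \<in> l2"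
  shows "l2inner (\<lambda>n. \<Sum>i\<in>I. c i * F i n) h = (\<Sum>i\<in>I. c i * l2inner (F i) h)"
proof -
  have "l2inner (\<lambda>n. \<Sum>i\<in>I. c i * F i n) h = (\<Sum>n. \<Sum>i\<in>I. c i * (F i n * cnj (h n)))"
    unfolding l2inner_def by (simp add: sum_distrib_right mult.assoc)
  also have "\<dots> = (\<Sum>i\<in>I. \<Sum>n. c i * (F i n * cnj (h n)))"
    by (rule suminf_sum) (intro summable_mult inner_summable assms)
  also have "\<dots> = (\<Sum>i\<in>I. c i * l2inner (F i) h)"
    unfolding l2inner_def
    by (intro sum.cong refl suminf_mult inner_summable assms)
  finally show ?thesis .
qed

lemma inner_lin_left:
  assumes "f \<in> l2" "g \<in> l2" "h \<in> l2"
  shows "l2inner (\<lambda>n. a * f n + g n) h = a * l2inner f h + l2inner g h"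
proof -
  have "l2inner (\<lambda>n. a * f n + g n) h = (\<Sum>n. a * (f n * cnj (h n)) + g n * cnj (h n))"
    unfolding l2inner_def by (simp add: algebra_simps)
  also have "\<dots> = (\<Sum>n. a * (f n * cnj (h n))) + (\<Sum>n. g n * cnj (h n))"
    by (intro suminf_add[symmetric] summable_mult inner_summable assms)
  also have "\<dots> = a * l2inner f h + l2inner g h"
    unfolding l2inner_def by (simp add: suminf_mult inner_summable assms)
  finally show ?thesis .
qed

lemma inner_cnj: "f \<in> l2 \<Longrightarrow> g \<in> l2 \<Longrightarrow> l2inner g f = cnj (l2inner f g)"
proof -
  assume a: "f \<in> l2" "g \<in> l2"
  have "(\<lambda>n. cnj (f n * cnj (g n))) sums cnj (l2inner f g)"
    unfolding l2inner_def by (rule sums_cnj[THEN iffD2, OF summable_sums[OF inner_summable[OF a]]])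
  moreover have "(\<lambda>n. cnj (f n * cnj (g n))) = (\<lambda>n. g n * cnj (f n))"
    by (simp add: mult.commute)
  ultimately have "(\<lambda>n. g n * cnj (f n)) sums cnj (l2inner f g)" by simp
  then show ?thesis unfolding l2inner_def by (rule sums_unique[symmetric])
qed

lemma inner_self: "f \<in> l2 \<Longrightarrow> l2inner f f = complex_of_real ((l2norm f)\<^sup>2)"
proof -
  assume f: "f \<in> l2"
  have "l2inner f f = (\<Sum>n. complex_of_real ((cmod (f n))\<^sup>2))"
    unfolding l2inner_def by (simp add: complex_norm_square[symmetric])
  also have "\<dots> = complex_of_real (\<Sum>n. (cmod (f n))\<^sup>2)"
    using f unfolding l2_iff by (simp add: suminf_of_real)
  finally show ?thesis using l2_sumsq[OF f] by simp
qed

lemma inner_ebasis_right: "l2inner f (ebasis j) = f j"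
proof -
  have "(\<lambda>n. f n * cnj (ebasis j n)) = (\<lambda>n. if n = j then f n else 0)"
    by (auto simp: ebasis_def)
  then show ?thesis unfolding l2inner_def using sums_unique[OF sums_single[of j f]] by simp
qed

lemma inner_ebasis_left: "l2inner (ebasis j) f = cnj (f j)"
proof -
  have "(\<lambda>n. ebasis j n * cnj (f n)) = (\<lambda>n. if n = j then cnj (f n) else 0)"
    by (auto simp: ebasis_def)
  then show ?thesis unfolding l2inner_def using sums_unique[OF sums_single[of j "\<lambda>n. cnj (f n)"]] by simp
qed

lemma CS:
  assumes f: "f \<in> l2" and g: "g \<in> l2"
  shows "cmod (l2inner f g) \<le> l2norm f * l2norm g"
proof -
  have "cmod (l2inner f g) \<le> (\<Sum>n. cmod (f n * cnj (g n)))"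
    unfolding l2inner_def by (rule summable_norm) (rule inner_abs_summable[OF f g])
  also have "\<dots> \<le> l2norm f * l2norm g"
  proof (rule suminf_le_const[OF inner_abs_summable[OF f g]])
    fix K
    have "(\<Sum>n<K. cmod (f n * cnj (g n))) = (\<Sum>n<K. \<bar>cmod (f n)\<bar> * \<bar>cmod (g n)\<bar>)"
      by (simp add: norm_mult)
    also have "\<dots> \<le> L2_set (\<lambda>n. cmod (f n)) {..<K} * L2_set (\<lambda>n. cmod (g n)) {..<K}"
      by (rule L2_set_mult_ineq)
    also have "\<dots> \<le> l2norm f * l2norm g"
      unfolding L2_set_def l2norm_def
      apply (intro mult_mono real_sqrt_le_mono sum_le_suminf)
      using f g by (auto simp: l2_iff suminf_nonneg sum_nonneg)
    finally show "(\<Sum>n<K. cmod (f n * cnj (g n))) \<le> l2norm f * l2norm g" .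
  qed
  finally show ?thesis .
qed

lemma l2norm_eq0: "f \<in> l2 \<Longrightarrow> l2norm f = 0 \<Longrightarrow> f = (\<lambda>n. 0)"
proof -
  assume f: "f \<in> l2" and z: "l2norm f = 0"
  have "(\<Sum>n. (cmod (f n))\<^sup>2) = 0" using l2_sumsq[OF f] z by simp
  then have "\<forall>n. (cmod (f n))\<^sup>2 = 0"
    using suminf_eq_zero_iff[of "\<lambda>n. (cmod (f n))\<^sup>2"] f unfolding l2_iff by simp
  then show ?thesis by auto
qed




lemma null_comp:
  fixes f :: "nat \<Rightarrow> 'a::real_normed_vector"
  assumes "\<And>M. norm (f M) \<le> g M" "g \<longlonglongrightarrow> 0"
  shows "f \<longlonglongrightarrow> 0"
proof (rule tendsto_0_le[OF assms(2), where K=1])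
  show "\<forall>\<^sub>F x in sequentially. norm (f x) \<le> norm (g x) * 1"
    using assms(1) by (intro always_eventually allI) (smt (verit) real_norm_def)
qed

definition trunc :: "nat \<Rightarrow> vec \<Rightarrow> vec" where
  "trunc M g = (\<lambda>j. if j < M then g j else 0)"

lemma sum_ext0:
  fixes A B :: nat
  assumes "\<And>j. A \<le> j \<Longrightarrow> f j = 0" "A \<le> B"
  shows "sum f {..<B} = sum f {..<A}"
proof (rule sum.mono_neutral_right)
  show "finite {..<B}" by simp
  show "{..<A} \<subseteq> {..<B}" using assms by auto
  show "\<forall>i\<in>{..<B} - {..<A}. f i = 0" using assms by auto
qed

lemma sum_ext00:
  fixes A B :: nat
  assumes "\<And>j. A \<le> j \<Longrightarrow> f j = 0" "\<And>j. B \<le> j \<Longrightarrow> f j = 0"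
  shows "sum f {..<A} = sum f {..<B}"
proof -
  have "sum f {..<max A B} = sum f {..<A}" using assms by (intro sum_ext0) auto
  moreover have "sum f {..<max A B} = sum f {..<B}" using assms by (intro sum_ext0) auto
  ultimately show ?thesis by simp
qed

lemma tail_sum:
  fixes a :: "nat \<Rightarrow> real"
  assumes "summable a"
  shows "(\<Sum>n. if n < M then 0 else a n) = suminf a - (\<Sum>n<M. a n)"
proof -
  have s1: "summable (\<lambda>n. if n < M then a n else 0)"
    by (rule summable_finite[of "{..<M}"]) auto
  have "(\<lambda>n. if n < M then 0 else a n) = (\<lambda>n. a n - (if n < M then a n else 0))" by auto
  then have "(\<Sum>n. if n < M then 0 else a n) = suminf a - (\<Sum>n. if n < M then a n else 0)"
    using suminf_diff[OF assms s1] by simp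
  also have "(\<Sum>n. if n < M then a n else (0::real)) = (\<Sum>n<M. a n)"
    by (subst suminf_finite[of "{..<M}"]) auto
  finally show ?thesis .
qed

lemma trunc_l2: "trunc M g \<in> l2"
  by (rule l2_finsupp[of M]) (simp add: trunc_def)

lemma tail_l2: "g \<in> l2 \<Longrightarrow> (\<lambda>n. g n - trunc M g n) \<in> l2"
  by (intro l2_diff trunc_l2)

lemma tail_tendsto:
  assumes g: "g \<in> l2"
  shows "(\<lambda>M. l2norm (\<lambda>n. g n - trunc M g n)) \<longlonglongrightarrow> 0"
proof -
  have s: "summable (\<lambda>n. (cmod (g n))\<^sup>2)" using g by (simp add: l2_iff)
  have eq: "l2norm (\<lambda>n. g n - trunc M g n) = sqrt ((\<Sum>n. (cmod (g n))\<^sup>2) - (\<Sum>n<M. (cmod (g n))\<^sup>2))" for M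
  proof -
    have "(\<lambda>n. (cmod (g n - trunc M g n))\<^sup>2) = (\<lambda>n. if n < M then 0 else (cmod (g n))\<^sup>2)"
      by (auto simp: trunc_def)
    then show ?thesis unfolding l2norm_def using tail_sum[OF s, of M] by simp
  qed
  have "(\<lambda>M. (\<Sum>n. (cmod (g n))\<^sup>2) - (\<Sum>n<M. (cmod (g n))\<^sup>2)) \<longlonglongrightarrow> (\<Sum>n. (cmod (g n))\<^sup>2) - (\<Sum>n. (cmod (g n))\<^sup>2)"
    by (intro tendsto_diff tendsto_const summable_LIMSEQ s)
  then have "(\<lambda>M. sqrt ((\<Sum>n. (cmod (g n))\<^sup>2) - (\<Sum>n<M. (cmod (g n))\<^sup>2))) \<longlonglongrightarrow> sqrt 0"
    by (intro tendsto_real_sqrt) simp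
  then show ?thesis by (simp add: eq)
qed

lemma inner_diff_left: "f \<in> l2 \<Longrightarrow> g \<in> l2 \<Longrightarrow> h \<in> l2 \<Longrightarrow>
    l2inner (\<lambda>n. f n - g n) h = l2inner f h - l2inner g h"
  using inner_lin_left[of g f h "-1"] by simp

locale ONB =
  fixes F :: "nat \<Rightarrow> vec" and N :: "nat \<Rightarrow> nat"
  assumes F_l2: "F j \<in> l2"
    and F_orth: "l2inner (F i) (F j) = (if i = j then 1 else 0)"
    and F_row: "N n \<le> j \<Longrightarrow> F j n = 0"
    and F_exp: "ebasis n = (\<lambda>m. \<Sum>j<N n. cnj (F j n) * F j m)"
begin

definition U :: "vec \<Rightarrow> vec" where "U g = (\<lambda>n. \<Sum>j<N n. g j * F j n)"
definition Ustar :: "vec \<Rightarrow> vec" where "Ustar h = (\<lambda>j. l2inner h (F j))"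

abbreviation comb :: "nat \<Rightarrow> (nat \<Rightarrow> complex) \<Rightarrow> vec" where
  "comb M c \<equiv> (\<lambda>n. \<Sum>j<M. c j * F j n)"

lemma comb_l2: "comb M c \<in> l2"
  by (intro l2_sum F_l2) auto

lemma comb_inner_F: "l2inner (comb M c) (F i) = (if i < M then c i else 0)"
  by (subst inner_sum_left) (auto simp: F_l2 F_orth if_distrib cong: if_cong)

lemma F_inner_comb: "l2inner (F i) (comb M c) = (if i < M then cnj (c i) else 0)"
  by (subst inner_cnj[OF comb_l2 F_l2]) (simp add: comb_inner_F)

lemma comb_inner_comb: "l2inner (comb M c) (comb M c') = (\<Sum>j<M. c j * cnj (c' j))"
  by (subst inner_sum_left) (auto simp: F_l2 comb_l2 F_inner_comb)

lemma comb_norm2: "(l2norm (comb M c))\<^sup>2 = (\<Sum>j<M. (cmod (c j))\<^sup>2)"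
proof -
  have "complex_of_real ((l2norm (comb M c))\<^sup>2) = (\<Sum>j<M. c j * cnj (c j))"
    using inner_self[OF comb_l2[where M=M and c=c]] comb_inner_comb[where M=M and c=c and c'=c] by simp
  also have "\<dots> = complex_of_real (\<Sum>j<M. (cmod (c j))\<^sup>2)"
    by (simp add: complex_norm_square[symmetric])
  finally show ?thesis by (simp only: of_real_eq_iff)
qed

lemma U_fin: "(\<And>j. M \<le> j \<Longrightarrow> g j = 0) \<Longrightarrow> U g = comb M g"
  unfolding U_def by (rule ext, rule sum_ext00) (auto simp: F_row)

lemma U_trunc: "U (trunc M g) = comb M g"
  by (subst U_fin[of M]) (auto simp: trunc_def)

lemma sq_le_sq: "(0::real) \<le> x \<Longrightarrow> x\<^sup>2 \<le> y\<^sup>2 \<Longrightarrow> 0 \<le> y \<Longrightarrow> x \<le> y"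
  using power2_le_imp_le by blast

lemma U_bound:
  assumes g: "g \<in> l2"
  shows "U g \<in> l2" "l2norm (U g) \<le> l2norm g"
proof -
  have bd: "(\<Sum>n<K. (cmod (U g n))\<^sup>2) \<le> (l2norm g)\<^sup>2" for K
  proof -
    define M where "M = (\<Sum>n<K. N n)"
    have NM: "n < K \<Longrightarrow> N n \<le> M" for n
      unfolding M_def by (rule member_le_sum) auto
    have "n < K \<Longrightarrow> U g n = U (trunc M g) n" for n
      using NM[of n] unfolding U_def trunc_def by (intro sum.cong) auto
    then have "(\<Sum>n<K. (cmod (U g n))\<^sup>2) = (\<Sum>n<K. (cmod (comb M g n))\<^sup>2)"
      by (simp add: U_trunc)
    also have "\<dots> \<le> (\<Sum>n. (cmod (comb M g n))\<^sup>2)"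
      by (rule sum_le_suminf) (use comb_l2[where M=M and c=g] in \<open>auto simp: l2_iff\<close>)
    also have "\<dots> = (\<Sum>j<M. (cmod (g j))\<^sup>2)"
      using l2_sumsq[OF comb_l2] comb_norm2 by simp
    also have "\<dots> \<le> (\<Sum>j. (cmod (g j))\<^sup>2)"
      by (rule sum_le_suminf) (use g in \<open>auto simp: l2_iff\<close>)
    finally show ?thesis using l2_sumsq[OF g] by simp
  qed
  show ul: "U g \<in> l2" unfolding l2_iff
    by (rule summableI_nonneg_bounded[OF _ bd]) simp
  have "(\<Sum>n. (cmod (U g n))\<^sup>2) \<le> (l2norm g)\<^sup>2"
    by (rule suminf_le_const[OF _ bd]) (use ul in \<open>simp add: l2_iff\<close>)
  then have "(l2norm (U g))\<^sup>2 \<le> (l2norm g)\<^sup>2" using l2_sumsq[OF ul] by simp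
  then show "l2norm (U g) \<le> l2norm g"
    using sq_le_sq l2norm_nonneg ul g by blast
qed

lemma Ustar_bound:
  assumes h: "h \<in> l2"
  shows "Ustar h \<in> l2" "l2norm (Ustar h) \<le> l2norm h"
proof -
  have bd: "(\<Sum>j<J. (cmod (Ustar h j))\<^sup>2) \<le> (l2norm h)\<^sup>2" for J
  proof -
    define c where "c = Ustar h"
    define v where "v = comb J c"
    have vl: "v \<in> l2" unfolding v_def by (rule comb_l2)
    have "l2inner v h = (\<Sum>j<J. c j * l2inner (F j) h)"
      unfolding v_def by (rule inner_sum_left) (auto simp: F_l2 h)
    also have "\<dots> = (\<Sum>j<J. c j * cnj (c j))"
      unfolding c_def Ustar_def by (simp add: inner_cnj[OF h F_l2])
    also have "\<dots> = complex_of_real ((l2norm v)\<^sup>2)"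
      unfolding v_def comb_norm2 by (simp add: complex_norm_square[symmetric])
    finally have "cmod (complex_of_real ((l2norm v)\<^sup>2)) \<le> l2norm v * l2norm h"
      using CS[OF vl h] by simp
    then have le: "(l2norm v)\<^sup>2 \<le> l2norm v * l2norm h" by (simp only: norm_of_real abs_power2)
    have nv: "0 \<le> l2norm v" "0 \<le> l2norm h" using l2norm_nonneg vl h by auto
    have "l2norm v \<le> l2norm h"
    proof (cases "l2norm v = 0")
      case True then show ?thesis using nv by simp
    next
      case False
      then have "0 < l2norm v" using nv by simp
      then show ?thesis using le by (simp add: power2_eq_square)
    qed
    then have "(l2norm v)\<^sup>2 \<le> (l2norm h)\<^sup>2" using nv by (simp add: power_mono)
    then show ?thesis unfolding v_def comb_norm2 c_def .
  qed
  show ul: "Ustar h \<in> l2" unfolding l2_iff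
    by (rule summableI_nonneg_bounded[OF _ bd]) simp
  have "(\<Sum>n. (cmod (Ustar h n))\<^sup>2) \<le> (l2norm h)\<^sup>2"
    by (rule suminf_le_const[OF _ bd]) (use ul in \<open>simp add: l2_iff\<close>)
  then have "(l2norm (Ustar h))\<^sup>2 \<le> (l2norm h)\<^sup>2" using l2_sumsq[OF ul] by simp
  then show "l2norm (Ustar h) \<le> l2norm h"
    using sq_le_sq l2norm_nonneg ul h by blast
qed

lemma U_lin: "U (\<lambda>n. a * f n + g n) = (\<lambda>n. a * U f n + U g n)"
  unfolding U_def by (simp add: algebra_simps sum.distrib sum_distrib_left)

lemma U_diff: "U (\<lambda>n. f n - g n) = (\<lambda>n. U f n - U g n)"
  unfolding U_def by (simp add: algebra_simps sum_subtractf)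

lemma Ustar_lin: "f \<in> l2 \<Longrightarrow> g \<in> l2 \<Longrightarrow> Ustar (\<lambda>n. a * f n + g n) = (\<lambda>n. a * Ustar f n + Ustar g n)"
  unfolding Ustar_def by (simp add: inner_lin_left F_l2)

lemma adjoint_fin:
  assumes h: "h \<in> l2"
  shows "l2inner (U (trunc M g)) h = l2inner (trunc M g) (Ustar h)"
proof -
  have "l2inner (U (trunc M g)) h = (\<Sum>j<M. g j * l2inner (F j) h)"
    unfolding U_trunc by (rule inner_sum_left) (auto simp: F_l2 h)
  also have "\<dots> = (\<Sum>n. trunc M g n * cnj (Ustar h n))"
    by (subst suminf_finite[of "{..<M}"])
       (auto simp: trunc_def Ustar_def inner_cnj[OF h F_l2])
  finally show ?thesis unfolding l2inner_def .
qed


lemma adjoint: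
  assumes g: "g \<in> l2" and h: "h \<in> l2"
  shows "l2inner (U g) h = l2inner g (Ustar h)"
proof -
  define A where "A M = l2inner (U (trunc M g)) h" for M
  have t: "(\<lambda>M. l2norm (\<lambda>n. g n - trunc M g n)) \<longlonglongrightarrow> 0" by (rule tail_tendsto[OF g])
  have "(\<lambda>M. A M - l2inner (U g) h) \<longlonglongrightarrow> 0"
  proof (rule null_comp)
    fix M
    show "norm (A M - l2inner (U g) h) \<le> l2norm (\<lambda>n. g n - trunc M g n) * l2norm h"
    proof -
      have "A M - l2inner (U g) h = - l2inner (U (\<lambda>n. g n - trunc M g n)) h"
        unfolding A_def U_diff
        by (subst inner_diff_left) (auto simp: U_bound g trunc_l2 h)
      then have "norm (A M - l2inner (U g) h) \<le> l2norm (U (\<lambda>n. g n - trunc M g n)) * l2norm h"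
        using CS[OF U_bound(1)[OF tail_l2[OF g]] h] by simp
      also have "\<dots> \<le> l2norm (\<lambda>n. g n - trunc M g n) * l2norm h"
        by (intro mult_right_mono U_bound(2) tail_l2 g l2norm_nonneg h)
      finally show "norm (A M - l2inner (U g) h) \<le> l2norm (\<lambda>n. g n - trunc M g n) * l2norm h" .
    qed
  next
    show "(\<lambda>M. l2norm (\<lambda>n. g n - trunc M g n) * l2norm h) \<longlonglongrightarrow> 0"
      using tendsto_mult_left_zero[OF t] by simp
  qed
  then have l1: "A \<longlonglongrightarrow> l2inner (U g) h" by (rule LIM_zero_cancel)
  have "(\<lambda>M. A M - l2inner g (Ustar h)) \<longlonglongrightarrow> 0"
  proof (rule null_comp)
    fix M
    show "norm (A M - l2inner g (Ustar h)) \<le> l2norm (\<lambda>n. g n - trunc M g n) * l2norm (Ustar h)"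
    proof -
      have "A M - l2inner g (Ustar h) = - l2inner (\<lambda>n. g n - trunc M g n) (Ustar h)"
        unfolding A_def adjoint_fin[OF h]
        by (subst inner_diff_left) (auto simp: Ustar_bound g trunc_l2 h)
      then show "norm (A M - l2inner g (Ustar h)) \<le> l2norm (\<lambda>n. g n - trunc M g n) * l2norm (Ustar h)"
        using CS[OF tail_l2[OF g] Ustar_bound(1)[OF h]] by simp
    qed
  next
    show "(\<lambda>M. l2norm (\<lambda>n. g n - trunc M g n) * l2norm (Ustar h)) \<longlonglongrightarrow> 0"
      using tendsto_mult_left_zero[OF t] by simp
  qed
  then have l2: "A \<longlonglongrightarrow> l2inner g (Ustar h)" by (rule LIM_zero_cancel)
  show ?thesis using LIMSEQ_unique[OF l1 l2] .
qed

lemma Ustar_F: "Ustar (F j) = ebasis j"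
  unfolding Ustar_def ebasis_def by (auto simp: F_orth)

lemma UstarU: "g \<in> l2 \<Longrightarrow> Ustar (U g) = g"
proof
  fix j assume g: "g \<in> l2"
  have "Ustar (U g) j = l2inner (U g) (F j)" by (simp add: Ustar_def)
  also have "\<dots> = l2inner g (ebasis j)" using adjoint[OF g F_l2] Ustar_F by simp
  finally show "Ustar (U g) j = g j" by (simp add: inner_ebasis_right)
qed

lemma UUstar: "h \<in> l2 \<Longrightarrow> U (Ustar h) = h"
proof
  fix n assume h: "h \<in> l2"
  have "h n = l2inner h (ebasis n)" by (simp add: inner_ebasis_right)
  also have "\<dots> = l2inner h (comb (N n) (\<lambda>j. cnj (F j n)))" using F_exp[of n] by simp
  also have "\<dots> = cnj (l2inner (comb (N n) (\<lambda>j. cnj (F j n))) h)"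
    by (rule inner_cnj[OF comb_l2 h])
  also have "\<dots> = cnj (\<Sum>j<N n. cnj (F j n) * l2inner (F j) h)"
    by (subst inner_sum_left) (auto simp: F_l2 h)
  also have "\<dots> = (\<Sum>j<N n. Ustar h j * F j n)"
    by (simp add: Ustar_def inner_cnj[OF h F_l2] mult.commute)
  finally show "U (Ustar h) n = h n" by (simp add: U_def)
qed

lemma unitary: "unitary_with_adj U Ustar"
proof -
  have bU: "bop U" unfolding bop_def
    using U_bound U_lin by (metis mult_1)
  have bS: "bop Ustar" unfolding bop_def
    using Ustar_bound Ustar_lin by (metis mult_1)
  show ?thesis unfolding unitary_with_adj_def is_adjoint_def
    using bU bS adjoint UstarU UUstar by blast
qed

end



lemma gcomb_l2: "(\<And>j. j < (M::nat) \<Longrightarrow> F j \<in> l2) \<Longrightarrow> (\<lambda>n. \<Sum>j<M. c j * F j n) \<in> l2"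
  by (rule l2_sum) auto

lemma gcomb_inner:
  fixes M :: nat
  assumes "\<And>j. j < M \<Longrightarrow> F j \<in> l2" "h \<in> l2"
    "\<And>j. j < M \<Longrightarrow> l2inner (F j) h = (if j = i then 1 else 0)"
  shows "l2inner (\<lambda>n. \<Sum>j<M. c j * F j n) h = (if i < M then c i else 0)"
proof -
  have "l2inner (\<lambda>n. \<Sum>j<M. c j * F j n) h = (\<Sum>j<M. c j * l2inner (F j) h)"
    by (rule inner_sum_left) (use assms in auto)
  also have "\<dots> = (\<Sum>j<M. if j = i then c j else 0)"
    by (rule sum.cong) (use assms in auto)
  also have "\<dots> = (if i < M then c i else 0)"
    by (simp add: sum.delta')
  finally show ?thesis .
qed

lemma gcomb_inner0:
  fixes M :: nat
  assumes "\<And>j. j < M \<Longrightarrow> F j \<in> l2" "h \<in> l2"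
    "\<And>j. j < M \<Longrightarrow> l2inner (F j) h = 0"
  shows "l2inner (\<lambda>n. \<Sum>j<M. c j * F j n) h = 0"
proof -
  have "l2inner (\<lambda>n. \<Sum>j<M. c j * F j n) h = (\<Sum>j<M. c j * l2inner (F j) h)"
    by (rule inner_sum_left) (use assms in auto)
  also have "\<dots> = 0" using assms by simp
  finally show ?thesis .
qed

lemma gcomb_norm2:
  fixes M :: nat
  assumes l: "\<And>j. j < M \<Longrightarrow> F j \<in> l2"
    and o: "\<And>i j. i < M \<Longrightarrow> j < M \<Longrightarrow> l2inner (F i) (F j) = (if i = j then 1 else 0)"
  shows "(l2norm (\<lambda>n. \<Sum>j<M. c j * F j n))\<^sup>2 = (\<Sum>j<M. (cmod (c j))\<^sup>2)"
proof -
  let ?v = "\<lambda>n. \<Sum>j<M. c j * F j n"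
  have vl: "?v \<in> l2" using gcomb_l2 l by blast
  have "l2inner ?v ?v = (\<Sum>j<M. c j * l2inner (F j) ?v)"
    by (rule inner_sum_left) (use l vl in auto)
  also have "\<dots> = (\<Sum>j<M. c j * cnj (c j))"
  proof (rule sum.cong)
    fix j assume j: "j \<in> {..<M}"
    have "l2inner (F j) ?v = cnj (l2inner ?v (F j))" using inner_cnj[OF vl l] j by simp
    also have "l2inner ?v (F j) = c j"
      using gcomb_inner[of M F "F j" j c] l o j by simp
    finally show "c j * l2inner (F j) ?v = c j * cnj (c j)" by simp
  qed simp
  also have "\<dots> = complex_of_real (\<Sum>j<M. (cmod (c j))\<^sup>2)"
    by (simp add: complex_norm_square[symmetric])
  finally show ?thesis using inner_self[OF vl] by (simp only: of_real_eq_iff)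
qed

lemma inner_scale_left: "f \<in> l2 \<Longrightarrow> h \<in> l2 \<Longrightarrow> l2inner (\<lambda>n. a * f n) h = a * l2inner f h"
  unfolding l2inner_def by (simp add: mult.assoc suminf_mult inner_summable)

definition lclosed :: "vec set \<Rightarrow> bool" where
  "lclosed S \<longleftrightarrow> (\<lambda>n. 0) \<in> S \<and> (\<forall>a f g. f \<in> S \<longrightarrow> g \<in> S \<longrightarrow> (\<lambda>n. a * f n + g n) \<in> S)"

lemma lclosed_sum:
  assumes "lclosed S" "finite I" "\<And>i. i \<in> I \<Longrightarrow> G i \<in> S"
  shows "(\<lambda>n. \<Sum>i\<in>I. c i * G i n) \<in> S"
  using assms(2,3)
proof (induction I rule: finite_induct)
  case empty then show ?case using assms(1) by (simp add: lclosed_def)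
next
  case (insert x I)
  then show ?case using assms(1) unfolding lclosed_def by simp
qed

section \<open>Orthonormal lists and Gram-Schmidt\<close>

definition lcomb :: "vec list \<Rightarrow> (nat \<Rightarrow> complex) \<Rightarrow> vec" where
  "lcomb L c = (\<lambda>n. \<Sum>j<length L. c j * (L!j) n)"

definition inspan :: "vec list \<Rightarrow> vec \<Rightarrow> bool" where
  "inspan L v \<longleftrightarrow> (\<exists>c. v = lcomb L c)"

definition orthlist :: "vec list \<Rightarrow> bool" where
  "orthlist L \<longleftrightarrow> (\<forall>j<length L. L!j \<in> l2) \<and>
     (\<forall>i<length L. \<forall>j<length L. l2inner (L!i) (L!j) = (if i = j then 1 else 0))"

definition proj :: "vec list \<Rightarrow> vec \<Rightarrow> vec" where
  "proj L g = lcomb L (\<lambda>j. l2inner g (L!j))"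

definition gs_step :: "vec list \<Rightarrow> vec \<Rightarrow> vec list" where
  "gs_step L g = (let h = (\<lambda>n. g n - proj L g n) in
     if h = (\<lambda>n. 0) then L else L @ [(\<lambda>n. complex_of_real (1 / l2norm h) * h n)])"

fun gsfold :: "vec list \<Rightarrow> vec list \<Rightarrow> vec list" where
  "gsfold L [] = L"
| "gsfold L (g # gs) = gsfold (gs_step L g) gs"

lemma orthlist_l2: "orthlist L \<Longrightarrow> j < length L \<Longrightarrow> L!j \<in> l2"
  by (simp add: orthlist_def)

lemma orthlist_set_l2: "orthlist L \<Longrightarrow> x \<in> set L \<Longrightarrow> x \<in> l2"
  by (auto simp: in_set_conv_nth orthlist_def)

lemma lcomb_l2: "orthlist L \<Longrightarrow> lcomb L c \<in> l2"
  unfolding lcomb_def by (rule gcomb_l2) (simp add: orthlist_def)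

lemma lcomb_inner: "orthlist L \<Longrightarrow> i < length L \<Longrightarrow> l2inner (lcomb L c) (L!i) = c i"
  unfolding lcomb_def
  by (subst gcomb_inner[where i=i]) (auto simp: orthlist_def)

lemma lcomb_inner0: "orthlist L \<Longrightarrow> h \<in> l2 \<Longrightarrow> (\<And>j. j < length L \<Longrightarrow> l2inner (L!j) h = 0) \<Longrightarrow>
   l2inner (lcomb L c) h = 0"
  unfolding lcomb_def
  by (rule gcomb_inner0) (auto simp: orthlist_def)

lemma inspan_expand:
  assumes o: "orthlist L" and s: "inspan L v"
  shows "v = proj L v"
proof -
  obtain c where c: "v = lcomb L c" using s by (auto simp: inspan_def)
  have "lcomb L c = lcomb L (\<lambda>j. l2inner (lcomb L c) (L!j))"
    unfolding lcomb_def by (intro ext sum.cong) (auto simp: lcomb_inner[OF o, unfolded lcomb_def])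
  then show ?thesis unfolding proj_def c by simp
qed

lemma proj_l2: "orthlist L \<Longrightarrow> proj L g \<in> l2"
  unfolding proj_def by (rule lcomb_l2)

lemma h_orth:
  assumes o: "orthlist L" and g: "g \<in> l2" and i: "i < length L"
  shows "l2inner (\<lambda>n. g n - proj L g n) (L!i) = 0"
  using inner_diff_left[OF g proj_l2[OF o] orthlist_l2[OF o i]]
  by (simp add: proj_def lcomb_inner[OF o i])

lemma inspan_append: "inspan L v \<Longrightarrow> inspan (L @ M) v"
proof -
  assume "inspan L v"
  then obtain c where c: "v = lcomb L c" by (auto simp: inspan_def)
  have "lcomb L c = lcomb (L @ M) (\<lambda>j. if j < length L then c j else 0)"
    unfolding lcomb_def
    by (rule ext, subst sum_ext0[of "length L" _ "length (L @ M)"]) (auto simp: nth_append)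
  then show ?thesis unfolding inspan_def c by blast
qed

lemma orthlist_snoc:
  assumes o: "orthlist L" and q: "q \<in> l2" and qq: "l2inner q q = 1"
    and qo: "\<And>i. i < length L \<Longrightarrow> l2inner q (L!i) = 0"
  shows "orthlist (L @ [q])"
proof -
  have qo': "l2inner (L!i) q = 0" if "i < length L" for i
    using inner_cnj[OF q orthlist_l2[OF o that]] qo[OF that] by simp
  show ?thesis unfolding orthlist_def
    using o q qq qo qo' by (auto simp: nth_append less_Suc_eq orthlist_def)
qed

lemma gs_step_props:
  assumes o: "orthlist L" and g: "g \<in> l2"
  shows "orthlist (gs_step L g)" "\<exists>M. gs_step L g = L @ M" "inspan (gs_step L g) g"
    "inspan L g \<Longrightarrow> gs_step L g = L" "length (gs_step L g) \<le> Suc (length L)"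
    "lclosed S \<Longrightarrow> set L \<subseteq> S \<Longrightarrow> g \<in> S \<Longrightarrow> set (gs_step L g) \<subseteq> S"
proof -
  define h where "h = (\<lambda>n. g n - proj L g n)"
  have hl: "h \<in> l2" unfolding h_def by (intro l2_diff g proj_l2 o)
  show "inspan L g \<Longrightarrow> gs_step L g = L"
  proof -
    assume "inspan L g"
    then have eq: "g = proj L g" by (rule inspan_expand[OF o])
    have "h = (\<lambda>n. 0)"
    proof
      fix n
      have "g n - proj L g n = 0" using fun_cong[OF eq, of n] by (simp only: right_minus_eq)
      then show "h n = 0" by (simp add: h_def)
    qed
    then show ?thesis unfolding gs_step_def h_def[symmetric] by simp
  qed
  have "orthlist (gs_step L g) \<and> (\<exists>M. gs_step L g = L @ M) \<and> inspan (gs_step L g) g \<and>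
      length (gs_step L g) \<le> Suc (length L) \<and>
      (lclosed S \<longrightarrow> set L \<subseteq> S \<longrightarrow> g \<in> S \<longrightarrow> set (gs_step L g) \<subseteq> S)"
  proof (cases "h = (\<lambda>n. 0)")
    case True
    then have eq: "gs_step L g = L" unfolding gs_step_def h_def[symmetric] by simp
    have "g = proj L g"
    proof
      fix n
      have "g n - proj L g n = 0" using fun_cong[OF True, of n] by (simp add: h_def)
      then show "g n = proj L g n" by (simp only: right_minus_eq)
    qed
    then have "inspan L g" unfolding proj_def inspan_def by blast
    then show ?thesis using eq o by auto
  next
    case False
    define r where "r = l2norm h"
    have r0: "r \<noteq> 0" using False l2norm_eq0[OF hl] r_def by auto
    have rpos: "r > 0" using r0 l2norm_nonneg[OF hl] r_def by simp
    define q where "q = (\<lambda>n. complex_of_real (1 / r) * h n)"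
    have eq: "gs_step L g = L @ [q]" unfolding gs_step_def h_def[symmetric] q_def r_def
      using False by simp
    have ql: "q \<in> l2" unfolding q_def by (rule l2_scale[OF hl])
    have ho: "l2inner h (L!i) = 0" if "i < length L" for i
      unfolding h_def by (rule h_orth[OF o g that])
    have qo: "l2inner q (L!i) = 0" if "i < length L" for i
      unfolding q_def by (subst inner_scale_left[OF hl orthlist_l2[OF o that]]) (simp add: ho[OF that])
    have hh: "l2inner h h = complex_of_real (r\<^sup>2)" unfolding r_def by (rule inner_self[OF hl])
    have qs: "l2inner q v = complex_of_real (1/r) * l2inner h v" if "v \<in> l2" for v
      unfolding q_def by (rule inner_scale_left[OF hl that])
    have "l2inner q q = complex_of_real (1/r) * l2inner h q" by (rule qs[OF ql])
    also have "l2inner h q = cnj (l2inner q h)" by (rule inner_cnj[OF ql hl])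
    also have "l2inner q h = complex_of_real (1/r) * l2inner h h" by (rule qs[OF hl])
    finally have qq: "l2inner q q = 1" using r0 by (simp add: hh power2_eq_square)
    have o2: "orthlist (L @ [q])" by (rule orthlist_snoc[OF o ql qq qo])
    have gsp: "g = lcomb (L @ [q]) (\<lambda>j. if j < length L then l2inner g (L!j) else complex_of_real r)"
    proof
      fix n
      have "lcomb (L @ [q]) (\<lambda>j. if j < length L then l2inner g (L!j) else complex_of_real r) n
          = proj L g n + complex_of_real r * q n"
        unfolding lcomb_def proj_def by (simp add: nth_append)
      also have "\<dots> = proj L g n + h n" unfolding q_def using r0 by simp
      also have "\<dots> = g n" unfolding h_def by simp
      finally show "g n = lcomb (L @ [q]) (\<lambda>j. if j < length L then l2inner g (L!j) else complex_of_real r) n" by simp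
    qed
    have sp: "inspan (L @ [q]) g" unfolding inspan_def using gsp by blast
    have cl: "set (L @ [q]) \<subseteq> S" if S: "lclosed S" "set L \<subseteq> S" "g \<in> S"
    proof -
      define a where "a = complex_of_real (1 / r)"
      have qeq: "q = (\<lambda>n. a * g n + (\<Sum>j<length L. (- (a * l2inner g (L!j))) * (L!j) n))"
        unfolding q_def h_def proj_def lcomb_def a_def
        by (simp add: algebra_simps sum_distrib_left sum_negf)
      have "(\<lambda>n. \<Sum>j<length L. (- (a * l2inner g (L!j))) * (L!j) n) \<in> S"
        by (rule lclosed_sum[OF S(1)]) (use S(2) in auto)
      then have "q \<in> S" unfolding qeq using S(1,3) unfolding lclosed_def by blast
      then show ?thesis using S(2) by simp
    qed
    show ?thesis using eq o2 sp cl by simp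
  qed
  then show "orthlist (gs_step L g)" "\<exists>M. gs_step L g = L @ M" "inspan (gs_step L g) g"
    "length (gs_step L g) \<le> Suc (length L)"
    "lclosed S \<Longrightarrow> set L \<subseteq> S \<Longrightarrow> g \<in> S \<Longrightarrow> set (gs_step L g) \<subseteq> S" by auto
qed

lemma gsfold_props:
  assumes "orthlist L" "\<forall>g\<in>set gs. g \<in> l2" "lclosed S" "set L \<subseteq> S" "set gs \<subseteq> S"
    "finite Q" "\<forall>v\<in>Q. inspan L v" "length L \<le> card Q"
  shows "orthlist (gsfold L gs) \<and> (\<exists>M. gsfold L gs = L @ M) \<and> set (gsfold L gs) \<subseteq> S \<and>
    (\<forall>v\<in>Q \<union> set gs. inspan (gsfold L gs) v) \<and> length (gsfold L gs) \<le> card (Q \<union> set gs)"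
  using assms
proof (induction gs arbitrary: L Q)
  case Nil
  then show ?case by simp
next
  case (Cons g gs)
  let ?L = "gs_step L g"
  have g: "g \<in> l2" using Cons.prems by simp
  note P = gs_step_props[OF Cons.prems(1) g]
  obtain M where M: "?L = L @ M" using P(2) by blast
  have a7: "\<forall>v\<in>insert g Q. inspan ?L v"
    using Cons.prems(7) P(3) M inspan_append by auto
  have a8: "length ?L \<le> card (insert g Q)"
  proof (cases "inspan L g")
    case True
    then show ?thesis using P(4) Cons.prems(6,8) by (simp add: card_insert_le le_trans)
  next
    case False
    then have "g \<notin> Q" using Cons.prems(7) by blast
    then show ?thesis using P(5) Cons.prems(6,8) by simp
  qed
  have IH: "orthlist (gsfold ?L gs) \<and> (\<exists>M. gsfold ?L gs = ?L @ M) \<and> set (gsfold ?L gs) \<subseteq> S \<and>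
    (\<forall>v\<in>insert g Q \<union> set gs. inspan (gsfold ?L gs) v) \<and> length (gsfold ?L gs) \<le> card (insert g Q \<union> set gs)"
    by (rule Cons.IH) (use Cons.prems P a7 a8 in auto)
  then show ?case using M by auto
qed

lemma trace_bound:
  assumes o: "orthlist L" and e: "\<And>i. i < m \<Longrightarrow> inspan L (ebasis i)"
  shows "m \<le> length L"
proof -
  have lnorm: "(l2norm (lcomb L c))\<^sup>2 = (\<Sum>j<length L. (cmod (c j))\<^sup>2)" for c
    unfolding lcomb_def by (rule gcomb_norm2) (use o in \<open>auto simp: orthlist_def\<close>)
  have one: "(\<Sum>j<length L. (cmod ((L!j) i))\<^sup>2) = 1" if i: "i < m" for i
  proof -
    have eqp: "ebasis i = lcomb L (\<lambda>j. l2inner (ebasis i) (L!j))"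
      using inspan_expand[OF o e[OF i]] unfolding proj_def .
    have "(l2norm (ebasis i))\<^sup>2 = (l2norm (lcomb L (\<lambda>j. l2inner (ebasis i) (L!j))))\<^sup>2"
      by (rule arg_cong[where f="\<lambda>v. (l2norm v)\<^sup>2", OF eqp])
    then have "(l2norm (ebasis i))\<^sup>2 = (\<Sum>j<length L. (cmod (l2inner (ebasis i) (L!j)))\<^sup>2)"
      by (simp only: lnorm)
    moreover have "(l2norm (ebasis i))\<^sup>2 = 1"
    proof -
      have c1: "l2inner (ebasis i) (ebasis i) = 1" using inner_ebasis_right[of "ebasis i" i] by (simp add: ebasis_def)
      have "complex_of_real ((l2norm (ebasis i))\<^sup>2) = 1"
        using inner_self[OF l2_ebasis[of i]] c1 by (simp only:)
      then show ?thesis by (simp only: of_real_eq_1_iff)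
    qed
    ultimately show ?thesis by (simp add: inner_ebasis_left)
  qed
  have col: "(\<Sum>i<m. (cmod ((L!j) i))\<^sup>2) \<le> 1" if j: "j < length L" for j
  proof -
    have lj: "L!j \<in> l2" using orthlist_l2[OF o j] .
    have "(\<Sum>i<m. (cmod ((L!j) i))\<^sup>2) \<le> (\<Sum>i. (cmod ((L!j) i))\<^sup>2)"
      by (rule sum_le_suminf) (use lj in \<open>auto simp: l2_iff\<close>)
    also have "\<dots> = (l2norm (L!j))\<^sup>2" by (rule l2_sumsq[OF lj])
    also have "\<dots> = 1"
    proof -
      have "complex_of_real ((l2norm (L!j))\<^sup>2) = 1"
        using inner_self[OF lj] o j unfolding orthlist_def by simp
      then show ?thesis by (simp only: of_real_eq_1_iff)
    qed
    finally show ?thesis .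
  qed
  have "real m = (\<Sum>i<m. \<Sum>j<length L. (cmod ((L!j) i))\<^sup>2)" using one by simp
  also have "\<dots> = (\<Sum>j<length L. \<Sum>i<m. (cmod ((L!j) i))\<^sup>2)" by (rule sum.swap)
  also have "\<dots> \<le> (\<Sum>j<length L. 1)" by (rule sum_mono) (use col in auto)
  finally show ?thesis by simp
qed




definition gen :: "nat \<Rightarrow> (nat \<Rightarrow> vec \<Rightarrow> vec) \<Rightarrow> nat list \<Rightarrow> vec" where
  "gen d X w = word_op (tupXM d X) w (ebasis 0)"

definition wl :: "nat \<Rightarrow> nat \<Rightarrow> nat list list" where
  "wl k d = (SOME xs. set xs = words k d)"

lemma words_finite: "finite (words k d)"
proof -
  have "words k d = {xs. set xs \<subseteq> {..d} \<and> length xs \<le> k}" by (auto simp: words_def)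
  then show ?thesis using finite_lists_length_le[of "{..d}" k] by simp
qed

lemma set_wl: "set (wl k d) = words k d"
  unfolding wl_def by (rule someI_ex) (rule finite_list[OF words_finite])

lemma words_mono: "k \<le> k' \<Longrightarrow> words k d \<subseteq> words k' d"
  by (auto simp: words_def)

lemma shiftM_l2: "f \<in> l2 \<Longrightarrow> shiftM f \<in> l2"
  unfolding l2_iff
  by (subst summable_Suc_iff[symmetric]) (simp add: shiftM_def)

lemma word_op_Cons: "word_op A (i # w) v = A i (word_op A w v)"
  by (simp add: word_op_def)

lemma word_op_Nil: "word_op A [] v = v"
  by (simp add: word_op_def)

lemma word_op_l2:
  assumes hX: "\<forall>i<d. bop (X i)"
  shows "set w \<subseteq> {..d} \<Longrightarrow> v \<in> l2 \<Longrightarrow> word_op (tupXM d X) w v \<in> l2"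
proof (induction w)
  case Nil then show ?case by (simp add: word_op_Nil)
next
  case (Cons i w)
  then have wl2: "word_op (tupXM d X) w v \<in> l2" by simp
  show ?case
  proof (cases "i < d")
    case True
    then have "bop (X i)" using hX by simp
    have t: "tupXM d X i = X i" by (simp add: tupXM_def True)
    show ?thesis unfolding word_op_Cons t using \<open>bop (X i)\<close> wl2 by (simp add: bop_def)
  next
    case False
    have t: "tupXM d X i = shiftM" by (simp add: tupXM_def False)
    show ?thesis unfolding word_op_Cons t using wl2 by (simp add: shiftM_l2)
  qed
qed

lemma gen_l2: "\<forall>i<d. bop (X i) \<Longrightarrow> w \<in> words k d \<Longrightarrow> gen d X w \<in> l2"
  unfolding gen_def words_def by (rule word_op_l2) (auto simp: l2_ebasis)

lemma shiftM_ebasis: "shiftM (ebasis i) = ebasis (Suc i)"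
  by (rule ext) (auto simp: shiftM_def ebasis_def)

lemma gen_rep: "gen d X (replicate i d) = ebasis i"
proof (induction i)
  case 0 then show ?case by (simp add: gen_def word_op_Nil)
next
  case (Suc i)
  then show ?case by (simp add: gen_def word_op_Cons tupXM_def shiftM_ebasis)
qed

lemma rep_words: "i \<le> k \<Longrightarrow> replicate i d \<in> words k d"
  by (auto simp: words_def)

section \<open>The spaces V_k\<close>

lemma Vk_closed: "lclosed (Vk k d X)"
  unfolding lclosed_def
proof (intro conjI allI impI)
  show "(\<lambda>n. 0) \<in> Vk k d X"
    unfolding Vk_def poly_eval_def by (rule CollectI, rule exI[of _ "\<lambda>w. 0"]) simp
  fix a f g assume f: "f \<in> Vk k d X" and g: "g \<in> Vk k d X"
  obtain p where p: "f = poly_eval k d X p (ebasis 0)" using f by (auto simp: Vk_def)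
  obtain q where q: "g = poly_eval k d X q (ebasis 0)" using g by (auto simp: Vk_def)
  have "(\<lambda>n. a * f n + g n) = poly_eval k d X (\<lambda>w. a * p w + q w) (ebasis 0)"
    unfolding p q poly_eval_def by (simp add: algebra_simps sum.distrib sum_distrib_left)
  then show "(\<lambda>n. a * f n + g n) \<in> Vk k d X" unfolding Vk_def by blast
qed

lemma gen_in_Vk: "w \<in> words k d \<Longrightarrow> gen d X w \<in> Vk k d X"
proof -
  assume w: "w \<in> words k d"
  have "gen d X w = poly_eval k d X (\<lambda>w'. if w' = w then 1 else 0) (ebasis 0)"
  proof
    fix n
    have "poly_eval k d X (\<lambda>w'. if w' = w then 1 else 0) (ebasis 0) n
        = (\<Sum>w'\<in>words k d. if w' = w then gen d X w' n else 0)"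
      unfolding poly_eval_def gen_def by (intro sum.cong) auto
    also have "\<dots> = gen d X w n" using w words_finite by (simp add: sum.delta')
    finally show "gen d X w n = poly_eval k d X (\<lambda>w'. if w' = w then 1 else 0) (ebasis 0) n" by simp
  qed
  then show ?thesis unfolding Vk_def by blast
qed

lemma Vk_mono: "k \<le> k' \<Longrightarrow> Vk k d X \<subseteq> Vk k' d X"
proof
  fix v assume kk: "k \<le> k'" and v: "v \<in> Vk k d X"
  obtain p where p: "v = poly_eval k d X p (ebasis 0)" using v by (auto simp: Vk_def)
  have "v = poly_eval k' d X (\<lambda>w. if w \<in> words k d then p w else 0) (ebasis 0)"
  proof
    fix n
    have "poly_eval k' d X (\<lambda>w. if w \<in> words k d then p w else 0) (ebasis 0) n
       = (\<Sum>w\<in>words k' d. if w \<in> words k d then p w * word_op (tupXM d X) w (ebasis 0) n else 0)"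
      unfolding poly_eval_def by (intro sum.cong) auto
    also have "\<dots> = (\<Sum>w\<in>words k' d \<inter> words k d. p w * word_op (tupXM d X) w (ebasis 0) n)"
      by (rule sum.inter_restrict[symmetric]) (rule words_finite)
    also have "words k' d \<inter> words k d = words k d" using words_mono[OF kk] by blast
    finally show "v n = poly_eval k' d X (\<lambda>w. if w \<in> words k d then p w else 0) (ebasis 0) n"
      unfolding p poly_eval_def by simp
  qed
  then show "v \<in> Vk k' d X" unfolding Vk_def by blast
qed

lemma inspan_lclosed: "lclosed {v. inspan L v}"
  unfolding lclosed_def
proof (intro conjI allI impI)
  show "(\<lambda>n. 0) \<in> {v. inspan L v}"
    unfolding inspan_def lcomb_def by (simp, rule exI[of _ "\<lambda>j. 0"]) simp
  fix a f g assume "f \<in> {v. inspan L v}" "g \<in> {v. inspan L v}"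
  then obtain c c' where c: "f = lcomb L c" "g = lcomb L c'" by (auto simp: inspan_def)
  have "(\<lambda>n. a * f n + g n) = lcomb L (\<lambda>j. a * c j + c' j)"
    unfolding c lcomb_def by (simp add: algebra_simps sum.distrib sum_distrib_left)
  then show "(\<lambda>n. a * f n + g n) \<in> {v. inspan L v}" unfolding inspan_def by blast
qed

lemma Vk_inspan:
  assumes v: "v \<in> Vk k d X" and all: "\<forall>w\<in>words k d. inspan L (gen d X w)"
  shows "inspan L v"
proof -
  obtain p where p: "v = poly_eval k d X p (ebasis 0)" using v by (auto simp: Vk_def)
  have "(\<lambda>n. \<Sum>w\<in>words k d. p w * gen d X w n) \<in> {v. inspan L v}"
    by (rule lclosed_sum[OF inspan_lclosed words_finite]) (use all in auto)
  then show ?thesis unfolding p poly_eval_def gen_def by simp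
qed

section \<open>The Gram-Schmidt stages\<close>

primrec Ls :: "nat \<Rightarrow> (nat \<Rightarrow> vec \<Rightarrow> vec) \<Rightarrow> nat \<Rightarrow> vec list" where
  "Ls d X 0 = gsfold [] (map (gen d X) (wl 0 d))"
| "Ls d X (Suc k) = gsfold (Ls d X k) (map (gen d X) (wl (Suc k) d))"

definition FF :: "nat \<Rightarrow> (nat \<Rightarrow> vec \<Rightarrow> vec) \<Rightarrow> nat \<Rightarrow> vec" where
  "FF d X j = Ls d X j ! j"

lemma Ls_props:
  assumes hX: "\<forall>i<d. bop (X i)"
  shows "orthlist (Ls d X k) \<and> set (Ls d X k) \<subseteq> Vk k d X \<and>
    (\<forall>w\<in>words k d. inspan (Ls d X k) (gen d X w)) \<and> length (Ls d X k) \<le> card (gen d X ` words k d)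
    \<and> (\<exists>M. Ls d X (Suc k) = Ls d X k @ M)"
proof (induction k)
  case 0
  have R: "orthlist (gsfold [] (map (gen d X) (wl 0 d))) \<and> (\<exists>M. gsfold [] (map (gen d X) (wl 0 d)) = [] @ M) \<and>
     set (gsfold [] (map (gen d X) (wl 0 d))) \<subseteq> Vk 0 d X \<and>
     (\<forall>v\<in>{} \<union> set (map (gen d X) (wl 0 d)). inspan (gsfold [] (map (gen d X) (wl 0 d))) v) \<and>
     length (gsfold [] (map (gen d X) (wl 0 d))) \<le> card ({} \<union> set (map (gen d X) (wl 0 d)))"
    by (rule gsfold_props)
       (auto simp: orthlist_def set_wl Vk_closed gen_in_Vk intro: gen_l2[OF hX])
  have R1: "orthlist (Ls d X 0) \<and> set (Ls d X 0) \<subseteq> Vk 0 d X \<and>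
    (\<forall>w\<in>words 0 d. inspan (Ls d X 0) (gen d X w)) \<and> length (Ls d X 0) \<le> card (gen d X ` words 0 d)"
    using R by (simp add: set_wl)
  let ?L = "Ls d X 0"
  have R2: "orthlist (gsfold ?L (map (gen d X) (wl (Suc 0) d))) \<and> (\<exists>M. gsfold ?L (map (gen d X) (wl (Suc 0) d)) = ?L @ M) \<and>
     set (gsfold ?L (map (gen d X) (wl (Suc 0) d))) \<subseteq> Vk (Suc 0) d X \<and>
     (\<forall>v\<in>gen d X ` words 0 d \<union> set (map (gen d X) (wl (Suc 0) d)). inspan (gsfold ?L (map (gen d X) (wl (Suc 0) d))) v) \<and>
     length (gsfold ?L (map (gen d X) (wl (Suc 0) d))) \<le> card (gen d X ` words 0 d \<union> set (map (gen d X) (wl (Suc 0) d)))"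
    by (rule gsfold_props)
       (use R1 Vk_mono[of 0 "Suc 0" d X] in \<open>auto simp: set_wl Vk_closed gen_in_Vk words_finite intro: gen_l2[OF hX]\<close>)
  show ?case using R1 R2 by simp
next
  case (Suc k)
  let ?L = "Ls d X (Suc k)"
  have R1: "orthlist ?L \<and> set ?L \<subseteq> Vk (Suc k) d X \<and>
    (\<forall>w\<in>words (Suc k) d. inspan ?L (gen d X w)) \<and> length ?L \<le> card (gen d X ` words (Suc k) d)"
  proof -
    let ?K = "Ls d X k"
    have R: "orthlist (gsfold ?K (map (gen d X) (wl (Suc k) d))) \<and> (\<exists>M. gsfold ?K (map (gen d X) (wl (Suc k) d)) = ?K @ M) \<and>
     set (gsfold ?K (map (gen d X) (wl (Suc k) d))) \<subseteq> Vk (Suc k) d X \<and>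
     (\<forall>v\<in>gen d X ` words k d \<union> set (map (gen d X) (wl (Suc k) d)). inspan (gsfold ?K (map (gen d X) (wl (Suc k) d))) v) \<and>
     length (gsfold ?K (map (gen d X) (wl (Suc k) d))) \<le> card (gen d X ` words k d \<union> set (map (gen d X) (wl (Suc k) d)))"
      by (rule gsfold_props)
         (use Suc.IH Vk_mono[of k "Suc k" d X] in \<open>auto simp: set_wl Vk_closed gen_in_Vk words_finite intro: gen_l2[OF hX]\<close>)
    have "gen d X ` words k d \<union> set (map (gen d X) (wl (Suc k) d)) = gen d X ` words (Suc k) d"
      using words_mono[of k "Suc k" d] by (auto simp: set_wl)
    then show ?thesis using R by simp
  qed
  let ?M = "map (gen d X) (wl (Suc (Suc k)) d)"
  have R2: "orthlist (gsfold ?L ?M) \<and> (\<exists>M. gsfold ?L ?M = ?L @ M) \<and>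
     set (gsfold ?L ?M) \<subseteq> Vk (Suc (Suc k)) d X \<and>
     (\<forall>v\<in>gen d X ` words (Suc k) d \<union> set ?M. inspan (gsfold ?L ?M) v) \<and>
     length (gsfold ?L ?M) \<le> card (gen d X ` words (Suc k) d \<union> set ?M)"
    by (rule gsfold_props)
       (use R1 Vk_mono[of "Suc k" "Suc (Suc k)" d X] in \<open>auto simp: set_wl Vk_closed gen_in_Vk words_finite intro: gen_l2[OF hX]\<close>)
  show ?case using R1 R2 by simp
qed




context
  fixes d :: nat and X :: "nat \<Rightarrow> vec \<Rightarrow> vec"
  assumes hX: "\<forall>i<d. bop (X i)"
begin

lemma Ls_prefix: "j \<le> k \<Longrightarrow> \<exists>M. Ls d X k = Ls d X j @ M"
proof (induction k rule: dec_induct)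
  case base then show ?case by simp
next
  case (step k)
  then obtain M where "Ls d X k = Ls d X j @ M" by blast
  moreover obtain M' where "Ls d X (Suc k) = Ls d X k @ M'" using Ls_props[OF hX, of k] by blast
  ultimately show ?case by auto
qed

lemma Ls_len: "Suc k \<le> length (Ls d X k)"
proof (rule trace_bound)
  show "orthlist (Ls d X k)" using Ls_props[OF hX, of k] by blast
  fix i assume "i < Suc k"
  then have "replicate i d \<in> words k d" by (intro rep_words) simp
  then show "inspan (Ls d X k) (ebasis i)"
    using Ls_props[OF hX, of k] gen_rep[of d X i] by metis
qed

lemma FF_nth: "j < length (Ls d X k) \<Longrightarrow> FF d X j = Ls d X k ! j"
proof (cases "j \<le> k")
  case True
  then obtain M where M: "Ls d X k = Ls d X j @ M" using Ls_prefix by blast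
  have "j < length (Ls d X j)" using Ls_len[of j] by simp
  then show ?thesis unfolding FF_def M by (simp add: nth_append)
next
  case False
  assume j: "j < length (Ls d X k)"
  obtain M where M: "Ls d X j = Ls d X k @ M" using Ls_prefix[of k j] False by auto
  show ?thesis unfolding FF_def M using j by (simp add: nth_append)
qed

lemma FF_nth': "j \<le> k \<Longrightarrow> FF d X j = Ls d X k ! j"
  using FF_nth Ls_len[of k] by simp

lemma FF_l2: "FF d X j \<in> l2"
  using Ls_props[OF hX, of j] FF_nth'[of j j] Ls_len[of j]
  by (simp add: orthlist_def)

lemma FF_orth: "l2inner (FF d X i) (FF d X j) = (if i = j then 1 else 0)"
proof -
  let ?k = "max i j"
  have "i < length (Ls d X ?k)" "j < length (Ls d X ?k)" using Ls_len[of ?k] by auto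
  moreover have "FF d X i = Ls d X ?k ! i" "FF d X j = Ls d X ?k ! j" by (auto intro: FF_nth')
  ultimately show ?thesis using Ls_props[OF hX, of ?k] by (simp add: orthlist_def)
qed

lemma FF_in_V: "j \<le> k \<Longrightarrow> FF d X j \<in> Vk k d X"
proof -
  assume j: "j \<le> k"
  have "j < length (Ls d X k)" using Ls_len[of k] j by simp
  then have "Ls d X k ! j \<in> set (Ls d X k)" by simp
  then show ?thesis using FF_nth'[OF j] Ls_props[OF hX, of k] by auto
qed

lemma len_alpha: "length (Ls d X k) \<le> alpha k d"
proof -
  have "card (gen d X ` words k d) \<le> card (words k d)" by (rule card_image_le[OF words_finite])
  then show ?thesis using Ls_props[OF hX, of k] by (simp add: alpha_def)
qed

lemma V_comb: "v \<in> Vk k d X \<Longrightarrow> \<exists>c. v = (\<lambda>n. \<Sum>j<alpha k d. c j * FF d X j n)"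
proof -
  assume v: "v \<in> Vk k d X"
  have "inspan (Ls d X k) v" by (rule Vk_inspan[OF v]) (use Ls_props[OF hX, of k] in blast)
  then obtain c where c: "v = lcomb (Ls d X k) c" by (auto simp: inspan_def)
  have "v = (\<lambda>n. \<Sum>j<alpha k d. (if j < length (Ls d X k) then c j else 0) * FF d X j n)"
  proof
    fix n
    have "v n = (\<Sum>j<length (Ls d X k). (if j < length (Ls d X k) then c j else 0) * FF d X j n)"
      unfolding c lcomb_def by (intro sum.cong) (auto simp: FF_nth)
    also have "\<dots> = (\<Sum>j<alpha k d. (if j < length (Ls d X k) then c j else 0) * FF d X j n)"
      by (rule sum_ext0[symmetric]) (auto simp: len_alpha)
    finally show "v n = (\<Sum>j<alpha k d. (if j < length (Ls d X k) then c j else 0) * FF d X j n)" .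
  qed
  then show ?thesis by (rule exI[of _ "\<lambda>j. if j < length (Ls d X k) then c j else 0"])
qed

lemma ebasis_comb: "\<exists>c. ebasis n = (\<lambda>m. \<Sum>j<alpha n d. c j * FF d X j m)"
proof -
  have "ebasis n \<in> Vk n d X" using gen_in_Vk[where X=X, OF rep_words[of n n d]] gen_rep[of d X n] by simp
  then show ?thesis by (rule V_comb)
qed

lemma ebasis_inner_FF: "l2inner (ebasis n) (FF d X j) = (if j < alpha n d then cnj (FF d X j n) else 0)"
proof -
  obtain c where c: "ebasis n = (\<lambda>m. \<Sum>j<alpha n d. c j * FF d X j m)" using ebasis_comb by blast
  have "l2inner (ebasis n) (FF d X j) = (if j < alpha n d then c j else 0)"
    unfolding c by (rule gcomb_inner) (auto simp: FF_l2 FF_orth)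
  moreover have "l2inner (ebasis n) (FF d X j) = cnj (FF d X j n)" by (rule inner_ebasis_left)
  ultimately show ?thesis by auto
qed

lemma ONB_inst: "ONB (FF d X) (\<lambda>n. alpha n d)"
proof
  show "FF d X j \<in> l2" for j by (rule FF_l2)
  show "l2inner (FF d X i) (FF d X j) = (if i = j then 1 else 0)" for i j by (rule FF_orth)
  show "FF d X j n = 0" if "alpha n d \<le> j" for n j
    using ebasis_inner_FF[of n j] that inner_ebasis_left[of n "FF d X j"] by simp
  show "ebasis n = (\<lambda>m. \<Sum>j<alpha n d. cnj (FF d X j n) * FF d X j m)" for n
  proof -
    obtain c where c: "ebasis n = (\<lambda>m. \<Sum>j<alpha n d. c j * FF d X j m)" using ebasis_comb by blast
    have cj: "c j = cnj (FF d X j n)" if "j < alpha n d" for j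
    proof -
      have "l2inner (ebasis n) (FF d X j) = (if j < alpha n d then c j else 0)"
        unfolding c by (rule gcomb_inner) (auto simp: FF_l2 FF_orth)
      then show ?thesis using ebasis_inner_FF[of n j] that by simp
    qed
    show ?thesis unfolding c[symmetric] using cj by (subst c) (intro ext sum.cong; simp)
  qed
qed

end

theorem mainTheorem15:
  fixes d :: nat and X :: "nat \<Rightarrow> vec \<Rightarrow> vec"
  assumes "\<forall>i<d. bop (X i)"
  shows "\<exists>u ustar. unitary_with_adj u ustar \<and>
           (\<forall>k. (\<forall>f\<in>span_e (k + 1). u f \<in> Vk k d X) \<and>
                (\<forall>v\<in>Vk k d X. ustar v \<in> span_e (alpha k d)))"
proof -
  interpret o: ONB "FF d X" "\<lambda>n. alpha n d" by (rule ONB_inst[OF assms])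
  have c1: "o.U f \<in> Vk k d X" if f: "f \<in> span_e (k + 1)" for f k
  proof -
    have "o.U f = o.comb (k + 1) f" by (rule o.U_fin) (use f in \<open>auto simp: span_e_def\<close>)
    also have "\<dots> \<in> Vk k d X"
      by (rule lclosed_sum[OF Vk_closed]) (auto intro: FF_in_V[OF assms])
    finally show ?thesis .
  qed
  have c2: "o.Ustar v \<in> span_e (alpha k d)" if v: "v \<in> Vk k d X" for v k
  proof -
    obtain c where c: "v = o.comb (alpha k d) c" using V_comb[OF assms v] by blast
    show ?thesis unfolding span_e_def o.Ustar_def c by (auto simp: o.comb_inner_F)
  qed
  show ?thesis using o.unitary c1 c2 by blast
qed


end
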